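(* Let $n\ge 0$ be an integer and for $k\in\mathbb{Z}_+$ let $$v_k(t)=c_k\,e^{-\frac{t^{2n+2}}{2n+2}}L^{(-\frac{1}{2n+2})}_{k}\!\left(\frac{t^{2n+2}}{n+1}\right),\qquad w_k(t)=d_k\,e^{-\frac{t^{2n+2}}{2n+2}}\,t\,L^{(\frac{1}{2n+2})}_{k}\!\left(\frac{t^{2n+2}}{n+1}\right),$$ with $c_k,d_k>0$ chosen so that $\|t^nv_k\|_{L^2(\mathbb{R})}=\|t^nw_k\|_{L^2(\mathbb{R})}=1$, and let $E_k=4k(n+1)+2n+1$. There exists a constant $C_1>0$ such that for all $k\in\mathbb{Z}_+$ $$\|v_k'\|_{L^\infty(\mathbb{R})}\le C_1E_k^{\frac72-\frac{1}{4n+4}},\qquad \|w_k'\|_{L^\infty(\mathbb{R})}\le C_1E_k^{\frac72-\frac{1}{4n+4}}.$$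
   Context: $L^{(a)}_k$ denotes the generalized Laguerre polynomial of degree $k$ and parameter $a$. These functions solve $-u''+t^{2(2n+1)}u=E\,t^{2n}u$, with $E=E_k$ for $v_k$ and $E=4k(n+1)+2n+3$ for $w_k$. *)

theory Defs
  imports "HOL-Analysis.Analysis"
begin

definition laguerre :: "nat \<Rightarrow> real \<Rightarrow> real \<Rightarrow> real" where
  "laguerre k a x = (\<Sum>i\<le>k. (-1)^i * ((real k + a) gchoose (k - i)) / fact i * x ^ i)"

definition v_raw :: "nat \<Rightarrow> nat \<Rightarrow> real \<Rightarrow> real" where
  "v_raw n k t = exp (- (t ^ (2*n+2)) / (2 * real n + 2))
      * laguerre k (- 1 / (2 * real n + 2)) (t ^ (2*n+2) / (real n + 1))"

definition w_raw :: "nat \<Rightarrow> nat \<Rightarrow> real \<Rightarrow> real" where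
  "w_raw n k t = exp (- (t ^ (2*n+2)) / (2 * real n + 2)) * t
      * laguerre k (1 / (2 * real n + 2)) (t ^ (2*n+2) / (real n + 1))"

definition c_const :: "nat \<Rightarrow> nat \<Rightarrow> real" where
  "c_const n k = 1 / sqrt (integral\<^sup>L lborel (\<lambda>t. (t ^ n * v_raw n k t)\<^sup>2))"

definition d_const :: "nat \<Rightarrow> nat \<Rightarrow> real" where
  "d_const n k = 1 / sqrt (integral\<^sup>L lborel (\<lambda>t. (t ^ n * w_raw n k t)\<^sup>2))"

definition v_fun :: "nat \<Rightarrow> nat \<Rightarrow> real \<Rightarrow> real" where
  "v_fun n k t = c_const n k * v_raw n k t"

definition w_fun :: "nat \<Rightarrow> nat \<Rightarrow> real \<Rightarrow> real" where
  "w_fun n k t = d_const n k * w_raw n k t"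

definition E_val :: "nat \<Rightarrow> nat \<Rightarrow> real" where
  "E_val n k = 4 * real k * (real n + 1) + 2 * real n + 1"

end

theory Submission
  imports Defs "HOL-Probability.Sinc_Integral" "HOL-Real_Asymp.Real_Asymp"
begin

definition pb :: "(real \<Rightarrow> real) \<Rightarrow> bool" where
  "pb p \<longleftrightarrow> (\<exists>C N. \<forall>t. \<bar>p t\<bar> \<le> C * (1 + t\<^sup>2) ^ N)"

definition rd :: "(real \<Rightarrow> real) \<Rightarrow> bool" where
  "rd f \<longleftrightarrow> (\<forall>N. \<exists>C. \<forall>t. \<bar>f t\<bar> * (1 + t\<^sup>2) ^ N \<le> C)"

lemma pb_const[simp, intro]: "pb (\<lambda>t. c)"
  unfolding pb_def by (rule exI[of _ "\<bar>c\<bar>"], rule exI[of _ 0]) auto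

lemma pb_id[simp, intro]: "pb (\<lambda>t. t)"
  unfolding pb_def
proof (rule exI[of _ 1], rule exI[of _ 1], intro allI)
  fix t :: real
  have "\<bar>t\<bar> \<le> 1 + t\<^sup>2"
  proof (cases "\<bar>t\<bar> \<le> 1")
    case False
    then have "\<bar>t\<bar> * 1 \<le> \<bar>t\<bar> * \<bar>t\<bar>" by (intro mult_left_mono) auto
    then show ?thesis by (simp add: power2_eq_square abs_mult_self_eq)
  next
    case True then show ?thesis by (smt (verit) zero_le_power2)
  qed
  then show "\<bar>t\<bar> \<le> 1 * (1 + t\<^sup>2) ^ 1" by simp
qed

lemma pow_mono_exp: "(1 + t\<^sup>2) ^ a \<le> (1 + (t::real)\<^sup>2) ^ (a + b)"
  by (rule power_increasing) auto

lemma pos_C: "\<bar>a\<bar> \<le> C * (1 + (t::real)\<^sup>2) ^ N \<Longrightarrow> C \<ge> 0"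
proof -
  assume h: "\<bar>a\<bar> \<le> C * (1 + (t::real)\<^sup>2) ^ N"
  have "0 < (1 + t\<^sup>2) ^ N" by (simp add: add_pos_nonneg)
  moreover have "0 \<le> C * (1 + t\<^sup>2) ^ N" using h abs_ge_zero order_trans by blast
  ultimately show "C \<ge> 0" by (simp add: zero_le_mult_iff)
qed

lemma pb_mult[intro]: assumes "pb p" "pb q" shows "pb (\<lambda>t. p t * q t)"
proof -
  obtain C N where C: "\<And>t. \<bar>p t\<bar> \<le> C * (1 + t\<^sup>2) ^ N" using assms(1) unfolding pb_def by blast
  obtain D M where D: "\<And>t. \<bar>q t\<bar> \<le> D * (1 + t\<^sup>2) ^ M" using assms(2) unfolding pb_def by blast
  have "\<bar>p t * q t\<bar> \<le> (C * D) * (1 + t\<^sup>2) ^ (N + M)" for t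
  proof -
    have "\<bar>p t * q t\<bar> = \<bar>p t\<bar> * \<bar>q t\<bar>" by (simp add: abs_mult)
    also have "\<dots> \<le> (C * (1 + t\<^sup>2) ^ N) * (D * (1 + t\<^sup>2) ^ M)"
      by (rule mult_mono[OF C D]) (auto intro: order_trans[OF abs_ge_zero C])
    finally show ?thesis by (simp add: power_add algebra_simps)
  qed
  then show ?thesis unfolding pb_def by blast
qed

lemma pb_add[intro]: assumes "pb p" "pb q" shows "pb (\<lambda>t. p t + q t)"
proof -
  obtain C N where C: "\<And>t. \<bar>p t\<bar> \<le> C * (1 + t\<^sup>2) ^ N" using assms(1) unfolding pb_def by blast
  obtain D M where D: "\<And>t. \<bar>q t\<bar> \<le> D * (1 + t\<^sup>2) ^ M" using assms(2) unfolding pb_def by blast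
  have "\<bar>p t + q t\<bar> \<le> (C + D) * (1 + t\<^sup>2) ^ (N + M)" for t
  proof -
    have C0: "C \<ge> 0" using C[of t] by (rule pos_C)
    have D0: "D \<ge> 0" using D[of t] by (rule pos_C)
    have "\<bar>p t + q t\<bar> \<le> C * (1 + t\<^sup>2) ^ N + D * (1 + t\<^sup>2) ^ M" using C[of t] D[of t] by linarith
    also have "\<dots> \<le> C * (1 + t\<^sup>2) ^ (N+M) + D * (1 + t\<^sup>2) ^ (N+M)"
      using pow_mono_exp[of t N M] pow_mono_exp[of t M N] C0 D0
      by (intro add_mono mult_left_mono) (auto simp: add.commute)
    finally show ?thesis by (simp add: algebra_simps)
  qed
  then show ?thesis unfolding pb_def by blast
qed

lemma pb_uminus[intro]: "pb p \<Longrightarrow> pb (\<lambda>t. - p t)"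
  unfolding pb_def by simp

lemma pb_diff[intro]: "pb p \<Longrightarrow> pb q \<Longrightarrow> pb (\<lambda>t. p t - q t)"
  using pb_add[of p "\<lambda>t. - q t"] by auto

lemma pb_pow[intro]: "pb p \<Longrightarrow> pb (\<lambda>t. p t ^ k)"
  by (induction k) auto

lemma pb_sum[intro]: "(\<And>i. i \<in> A \<Longrightarrow> pb (\<lambda>t. f i t)) \<Longrightarrow> pb (\<lambda>t. \<Sum>i\<in>A. f i t)"
proof (induction A rule: infinite_finite_induct)
  case (insert x F) then show ?case by (simp, intro pb_add) auto
qed auto

lemma rd_pb_mult[intro]: assumes "rd f" "pb p" shows "rd (\<lambda>t. p t * f t)"
  unfolding rd_def
proof
  fix N
  obtain C M where C: "\<And>t. \<bar>p t\<bar> \<le> C * (1 + t\<^sup>2) ^ M" using assms(2) unfolding pb_def by blast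
  obtain D where D: "\<And>t. \<bar>f t\<bar> * (1 + t\<^sup>2) ^ (N + M) \<le> D" using assms(1) unfolding rd_def by blast
  have "\<bar>p t * f t\<bar> * (1 + t\<^sup>2) ^ N \<le> C * D" for t
  proof -
    have C0: "C \<ge> 0" using C[of t] by (rule pos_C)
    have "\<bar>p t * f t\<bar> * (1 + t\<^sup>2) ^ N = \<bar>p t\<bar> * (\<bar>f t\<bar> * (1 + t\<^sup>2) ^ N)" by (simp add: abs_mult)
    also have "\<dots> \<le> (C * (1 + t\<^sup>2) ^ M) * (\<bar>f t\<bar> * (1 + t\<^sup>2) ^ N)"
      by (rule mult_right_mono[OF C]) auto
    also have "\<dots> = C * (\<bar>f t\<bar> * (1 + t\<^sup>2) ^ (N + M))" by (simp add: power_add algebra_simps)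
    also have "\<dots> \<le> C * D" by (rule mult_left_mono[OF D C0])
    finally show ?thesis .
  qed
  then show "\<exists>C. \<forall>t. \<bar>p t * f t\<bar> * (1 + t\<^sup>2) ^ N \<le> C" by blast
qed

lemma rd_imp_pb: "rd f \<Longrightarrow> pb f"
  unfolding rd_def pb_def by (metis mult.commute mult_1 power_0 mult_1_right)

lemma rd_mult[intro]: "rd f \<Longrightarrow> rd g \<Longrightarrow> rd (\<lambda>t. f t * g t)"
  using rd_pb_mult[of g f] rd_imp_pb by auto

lemma rd_add[intro]: assumes "rd f" "rd g" shows "rd (\<lambda>t. f t + g t)"
  unfolding rd_def
proof
  fix N
  obtain C where C: "\<And>t. \<bar>f t\<bar> * (1 + t\<^sup>2) ^ N \<le> C" using assms(1) unfolding rd_def by blast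
  obtain D where D: "\<And>t. \<bar>g t\<bar> * (1 + t\<^sup>2) ^ N \<le> D" using assms(2) unfolding rd_def by blast
  have "\<bar>f t + g t\<bar> * (1 + t\<^sup>2) ^ N \<le> C + D" for t
  proof -
    have "\<bar>f t + g t\<bar> * (1 + t\<^sup>2) ^ N \<le> (\<bar>f t\<bar> + \<bar>g t\<bar>) * (1 + t\<^sup>2) ^ N"
      by (rule mult_right_mono) auto
    then show ?thesis using C[of t] D[of t] by (simp add: algebra_simps)
  qed
  then show "\<exists>C. \<forall>t. \<bar>f t + g t\<bar> * (1 + t\<^sup>2) ^ N \<le> C" by blast
qed

lemma rd_cmult: "rd f \<Longrightarrow> rd (\<lambda>t. c * f t)"
  using rd_pb_mult[of f "\<lambda>t. c"] by auto

lemma rd_diff: "rd f \<Longrightarrow> rd g \<Longrightarrow> rd (\<lambda>t. f t - g t)"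
  using rd_add[of f "\<lambda>t. (-1) * g t"] rd_cmult[of g "-1"] by auto

lemma rd_powmult: "rd f \<Longrightarrow> rd (\<lambda>t. t ^ a * f t)"
  using rd_pb_mult[of f "\<lambda>t. t ^ a"] pb_pow[OF pb_id] by auto

lemma rd_bound2: assumes "rd f" obtains C where "\<And>t. \<bar>f t\<bar> \<le> C * inverse (1 + t\<^sup>2)"
proof -
  obtain C where C: "\<And>t. \<bar>f t\<bar> * (1 + t\<^sup>2) ^ 1 \<le> C" using assms unfolding rd_def by blast
  have "\<bar>f t\<bar> \<le> C * inverse (1 + t\<^sup>2)" for t
    using C[of t] by (simp add: field_simps add_pos_nonneg)
  then show ?thesis using that by blast
qed

lemma rd_integrable: assumes "rd f" "continuous_on UNIV f" shows "integrable lborel f"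
proof -
  obtain C where C: "\<And>t. \<bar>f t\<bar> \<le> C * inverse (1 + t\<^sup>2)" using rd_bound2[OF assms(1)] by blast
  have i: "integrable lborel (\<lambda>x. inverse (1 + x^2) :: real)"
    using integrable_inverse_1_plus_square by (simp add: set_integrable_def)
  show ?thesis
    by (rule Bochner_Integration.integrable_bound[OF integrable_mult_right[OF i, of C]])
       (use assms(2) C in \<open>auto intro!: borel_measurable_continuous_onI AE_I2 order_trans[OF C abs_ge_self]\<close>)
qed

lemma rd_tendsto: assumes "rd f" shows "(f \<longlongrightarrow> 0) at_top" "(f \<longlongrightarrow> 0) at_bot"
proof -
  obtain C where C: "\<And>t. \<bar>f t\<bar> \<le> C * inverse (1 + t\<^sup>2)" using rd_bound2[OF assms(1)] by blast
  have l1: "((\<lambda>t. C * inverse (1 + t\<^sup>2)) \<longlongrightarrow> 0) at_top" by real_asymp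
  have l2: "((\<lambda>t. C * inverse (1 + t\<^sup>2)) \<longlongrightarrow> 0) at_bot" by real_asymp
  show "(f \<longlongrightarrow> 0) at_top"
    by (rule tendsto_0_le[OF l1, of _ 1]) (use C in \<open>auto intro!: always_eventually order_trans[OF C]\<close>)
  show "(f \<longlongrightarrow> 0) at_bot"
    by (rule tendsto_0_le[OF l2, of _ 1]) (use C in \<open>auto intro!: always_eventually order_trans[OF C]\<close>)
qed

lemma LBINT_UNIV: "(LBINT x=-\<infinity>..\<infinity>. g x) = integral\<^sup>L lborel (g :: real \<Rightarrow> real)"
  by (simp add: interval_lebesgue_integral_def set_lebesgue_integral_def)

lemma integral_deriv_zero:
  fixes G g :: "real \<Rightarrow> real"
  assumes d: "\<And>t. (G has_real_derivative g t) (at t)" and c: "continuous_on UNIV g"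
    and i: "integrable lborel g" and t1: "(G \<longlongrightarrow> 0) at_top" and t2: "(G \<longlongrightarrow> 0) at_bot"
  shows "integral\<^sup>L lborel g = 0"
proof -
  have "(LBINT x=-\<infinity>..\<infinity>. g x) = 0 - 0"
    by (rule interval_integral_FTC_integrable)
       (use d c i t1 t2 in \<open>auto simp: has_real_derivative_iff_has_vector_derivative[symmetric]
           set_integrable_def ereal_tendsto_simps continuous_on_eq_continuous_at\<close>)
  then show ?thesis by (simp add: LBINT_UNIV)
qed

lemma deriv_le_int:
  fixes G g :: "real \<Rightarrow> real"
  assumes d: "\<And>t. (G has_real_derivative g t) (at t)" and c: "continuous_on UNIV g"
    and i: "integrable lborel g" and t2: "(G \<longlongrightarrow> 0) at_bot"
  shows "G t0 \<le> integral\<^sup>L lborel (\<lambda>t. \<bar>g t\<bar>)"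
proof -
  have cG: "isCont G t0" using d DERIV_isCont by blast
  have si: "set_integrable lborel (einterval (-\<infinity>) (ereal t0)) g"
    unfolding set_integrable_def by (rule integrable_mult_indicator) (auto simp: i)
  have "(LBINT x=-\<infinity>..ereal t0. g x) = G t0 - 0"
    by (rule interval_integral_FTC_integrable)
       (use d c si t2 cG in \<open>auto simp: has_real_derivative_iff_has_vector_derivative[symmetric]
           ereal_tendsto_simps continuous_on_eq_continuous_at isCont_def filterlim_at_split\<close>)
  then have "G t0 = integral\<^sup>L lborel (\<lambda>x. indicator {..<t0} x * g x)"
    by (simp add: interval_lebesgue_integral_def set_lebesgue_integral_def)
  also have "\<dots> \<le> integral\<^sup>L lborel (\<lambda>t. \<bar>g t\<bar>)"
    using si by (intro integral_mono) (auto simp: set_integrable_def i indicator_def)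
  finally show ?thesis .
qed

lemma pw0: "(t::real)^(a*n) = (t^n)^a"
  by (metis power_mult mult.commute)

lemma pw: "(t::real)^(a*n+b) = t^b * (t^n)^a"
  by (simp add: power_add pw0 mult.commute)

lemma pws: fixes t :: real shows
  "t^(4*n+2) = t^2*(t^n)^4" "t^(4*n+1) = t*(t^n)^4" "t^(4*n) = (t^n)^4" "t^(8*n+4) = t^4*(t^n)^8"
  "t^(6*n+2) = t^2 * (t^n)^6" "t^(2*n) = (t^n)^2" "4*n+2-1 = 4*n+1" "4*n+1-1=4*n"
  "4*n+2 - Suc 0 = 4*n+1" "4*n+1 - Suc 0 = 4*n"
  by (simp_all only: pw pw0) simp_all

lemma q4: fixes t :: real shows "t^(4*n) = (t^2)^(2*n)" "t^(2*n) = (t^2)^n" "t^(4*n+2) = (t^2)^(2*n+1)"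
proof -
  have a: "4*n = 2*(2*n)" by simp_all
  show "t^(4*n) = (t^2)^(2*n)" unfolding a power_mult ..
  show "t^(2*n) = (t^2)^n" unfolding power_mult ..
  have b: "4*n+2 = 2*(2*n+1)" by simp
  show "t^(4*n+2) = (t^2)^(2*n+1)" unfolding b power_mult ..
qed

lemma int3: "integrable lborel f \<Longrightarrow> integrable lborel g \<Longrightarrow> integrable lborel h \<Longrightarrow>
  integral\<^sup>L lborel (\<lambda>t. f t + g t - (E::real) * h t) = integral\<^sup>L lborel f + integral\<^sup>L lborel g - E * integral\<^sup>L lborel (h :: real \<Rightarrow> real)"
  by simp

lemma int4: "integrable lborel f \<Longrightarrow> integrable lborel g \<Longrightarrow> integrable lborel h \<Longrightarrow> integrable lborel k \<Longrightarrow>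
  integral\<^sup>L lborel (\<lambda>t. f t + g t - (E::real) * h t - c * k t) = integral\<^sup>L lborel f + integral\<^sup>L lborel g - E * integral\<^sup>L lborel h - c * integral\<^sup>L lborel (k :: real \<Rightarrow> real)"
  by simp

lemma int3b: "integrable lborel f \<Longrightarrow> integrable lborel g \<Longrightarrow> integrable lborel h \<Longrightarrow>
  integral\<^sup>L lborel (\<lambda>t. f t + 2 * g t + (E::real) * h t) = integral\<^sup>L lborel f + 2 * integral\<^sup>L lborel g + E * integral\<^sup>L lborel (h :: real \<Rightarrow> real)"
  by simp

lemma int2: "integrable lborel f \<Longrightarrow> integrable lborel g \<Longrightarrow>
  integral\<^sup>L lborel (\<lambda>t. f t / 2 + (E::real) * g t) = integral\<^sup>L lborel f / 2 + E * integral\<^sup>L lborel (g :: real \<Rightarrow> real)"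
  by simp

lemma int2b: "integrable lborel f \<Longrightarrow> integrable lborel g \<Longrightarrow>
  integral\<^sup>L lborel (\<lambda>t. f t + g t) = integral\<^sup>L lborel f + integral\<^sup>L lborel (g :: real \<Rightarrow> real)"
  by simp

lemma core:
  fixes r r1 :: "real \<Rightarrow> real" and E :: real and n :: nat
  assumes d1: "\<And>t. (r has_real_derivative r1 t) (at t)"
    and d2: "\<And>t. (r1 has_real_derivative (t^(4*n+2) - E * t^(2*n)) * r t) (at t)"
    and rr: "rd r" and rr1: "rd r1" and E1: "E \<ge> 1"
  shows "(r1 t0)\<^sup>2 \<le> (9 + 4*(4*real n+2)*(4*real n+1)) * E^3 * integral\<^sup>L lborel (\<lambda>t. (t^n * r t)\<^sup>2)"
proof -
  have cr: "continuous_on UNIV r" using d1 DERIV_isCont continuous_at_imp_continuous_on by blast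
  have cr1: "continuous_on UNIV r1" using d2 DERIV_isCont continuous_at_imp_continuous_on by blast
  have ir: "integrable lborel (\<lambda>t. t^a * (r t * r t))" for a
    by (rule rd_integrable[OF rd_powmult[OF rd_mult[OF rr rr]]]) (use cr in \<open>auto intro!: continuous_intros\<close>)
  have ir1: "integrable lborel (\<lambda>t. t^a * (r1 t * r1 t))" for a
    by (rule rd_integrable[OF rd_powmult[OF rd_mult[OF rr1 rr1]]]) (use cr1 in \<open>auto intro!: continuous_intros\<close>)
  have rq: "rd (\<lambda>t. (t^(4*n+2) - E * t^(2*n)) * r t)"
    by (rule rd_pb_mult[OF rr]) (intro pb_diff pb_mult pb_pow pb_id pb_const)
  have cq: "continuous_on UNIV (\<lambda>t. (t^(4*n+2) - E * t^(2*n)) * r t)"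
    using cr by (auto intro!: continuous_intros)
  define I where "I = integral\<^sup>L lborel (\<lambda>t. t^(2*n) * (r t * r t))"
  define B where "B = integral\<^sup>L lborel (\<lambda>t. t^0 * (r1 t * r1 t))"
  define P where "P = integral\<^sup>L lborel (\<lambda>t. t^(4*n+2) * (r t * r t))"
  define X where "X = integral\<^sup>L lborel (\<lambda>t. t^(8*n+4) * (r t * r t))"
  define Y where "Y = integral\<^sup>L lborel (\<lambda>t. t^(4*n) * (r t * r t))"
  define Z where "Z = integral\<^sup>L lborel (\<lambda>t. t^(6*n+2) * (r t * r t))"
  define J where "J = integral\<^sup>L lborel (\<lambda>t. t^(4*n+2) * (r1 t * r1 t))"
  define c :: real where "c = (4*real n+2)*(4*real n+1)/2"
  have Ieq: "integral\<^sup>L lborel (\<lambda>t. (t^n * r t)\<^sup>2) = I"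
  proof -
    have e: "(t^n * r t)\<^sup>2 = t^(2*n) * (r t * r t)" for t :: real
      by (simp add: power_mult_distrib power2_eq_square mult_2 power_add)
    show ?thesis unfolding I_def e ..
  qed
  have id0: "B + P - E * I = 0"
  proof -
    have "integral\<^sup>L lborel (\<lambda>t. t^0 * (r1 t * r1 t) + t^(4*n+2) * (r t * r t) - E * (t^(2*n) * (r t * r t))) = 0"
    proof (rule integral_deriv_zero[where G = "\<lambda>t. r t * r1 t"])
      fix t
      show "((\<lambda>t. r t * r1 t) has_real_derivative
          t^0 * (r1 t * r1 t) + t^(4*n+2) * (r t * r t) - E * (t^(2*n) * (r t * r t))) (at t)"
        by (rule derivative_eq_intros d1 d2 refl)+ (simp add: algebra_simps)
    next
      show "integrable lborel (\<lambda>t. t^0 * (r1 t * r1 t) + t^(4*n+2) * (r t * r t) - E * (t^(2*n) * (r t * r t)))"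
        by (intro Bochner_Integration.integrable_diff Bochner_Integration.integrable_add Bochner_Integration.integrable_mult_right ir ir1)
    qed (use cr cr1 rd_tendsto[OF rd_mult[OF rr rr1]] in \<open>auto intro!: continuous_intros\<close>)
    then show ?thesis unfolding B_def P_def I_def int3[OF ir1[of 0] ir[of "4*n+2"] ir[of "2*n"]] .
  qed
  have id1: "J + X - E * Z - c * Y = 0"
  proof -
    have "integral\<^sup>L lborel (\<lambda>t. t^(4*n+2) * (r1 t * r1 t) + t^(8*n+4) * (r t * r t)
         - E * (t^(6*n+2) * (r t * r t)) - c * (t^(4*n) * (r t * r t))) = 0"
    proof (rule integral_deriv_zero[where G = "\<lambda>t. t^(4*n+2) * (r t * r1 t) - ((4*real n+2)/2) * (t^(4*n+1) * (r t * r t))"])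
      fix t :: real
      show "((\<lambda>t. t^(4*n+2) * (r t * r1 t) - ((4*real n+2)/2) * (t^(4*n+1) * (r t * r t))) has_real_derivative
          t^(4*n+2) * (r1 t * r1 t) + t^(8*n+4) * (r t * r t)
         - E * (t^(6*n+2) * (r t * r t)) - c * (t^(4*n) * (r t * r t))) (at t)"
        apply (rule derivative_eq_intros d1 d2 refl)+
        apply (simp only: pws)
        apply (simp add: c_def field_simps eval_nat_numeral)
        done
    next
      show "integrable lborel (\<lambda>t. t^(4*n+2) * (r1 t * r1 t) + t^(8*n+4) * (r t * r t)
         - E * (t^(6*n+2) * (r t * r t)) - c * (t^(4*n) * (r t * r t)))"
        by (intro Bochner_Integration.integrable_diff Bochner_Integration.integrable_add Bochner_Integration.integrable_mult_right ir ir1)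
    next
      have rdG: "rd (\<lambda>t. t^(4*n+2) * (r t * r1 t) - ((4*real n+2)/2) * (t^(4*n+1) * (r t * r t)))"
        by (rule rd_diff[OF rd_powmult[OF rd_mult[OF rr rr1]] rd_cmult[OF rd_powmult[OF rd_mult[OF rr rr]]]])
      show "((\<lambda>t. t^(4*n+2) * (r t * r1 t) - ((4*real n+2)/2) * (t^(4*n+1) * (r t * r t))) \<longlongrightarrow> 0) at_top"
        by (rule rd_tendsto[OF rdG])
      show "((\<lambda>t. t^(4*n+2) * (r t * r1 t) - ((4*real n+2)/2) * (t^(4*n+1) * (r t * r t))) \<longlongrightarrow> 0) at_bot"
        by (rule rd_tendsto[OF rdG])
    qed (use cr cr1 in \<open>auto intro!: continuous_intros\<close>)
    then show ?thesis unfolding J_def X_def Z_def Y_def int4[OF ir1[of "4*n+2"] ir[of "8*n+4"] ir[of "6*n+2"] ir[of "4*n"]] .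
  qed
  have sq42: "t^(4*n+2) = (t^(2*n+1))\<^sup>2" for t :: real
    by (simp only: power_mult[symmetric]) (simp add: algebra_simps)
  have J0: "J \<ge> 0" unfolding J_def by (rule integral_nonneg_AE, rule AE_I2) (subst sq42, simp)
  have B0: "B \<ge> 0" unfolding B_def by (rule integral_nonneg_AE) auto
  have I0: "I \<ge> 0" unfolding I_def by (rule integral_nonneg_AE) (auto simp: power_mult)
  have ZX: "E * Z \<le> X / 2 + E^2 / 2 * Y"
  proof -
    have "integral\<^sup>L lborel (\<lambda>t. E * (t^(6*n+2) * (r t * r t)))
       \<le> integral\<^sup>L lborel (\<lambda>t. t^(8*n+4) * (r t * r t) / 2 + E^2/2 * (t^(4*n) * (r t * r t)))"
    proof (rule integral_mono)
      fix t :: real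
      have e1: "t^(8*n+4) = t^(4*n+2) * t^(4*n+2)" "t^(6*n+2) = t^(4*n+2) * t^(2*n)"
         "t^(4*n) = t^(2*n) * t^(2*n)" by (simp_all only: pws) (simp_all add: eval_nat_numeral algebra_simps)
      have "0 \<le> (t^(4*n+2) - E * t^(2*n))\<^sup>2 * (r t * r t)" by simp
      then show "E * (t^(6*n+2) * (r t * r t)) \<le> t^(8*n+4) * (r t * r t) / 2 + E^2/2 * (t^(4*n) * (r t * r t))"
        unfolding e1 by (simp add: power2_eq_square algebra_simps)
    qed (intro Bochner_Integration.integrable_diff Bochner_Integration.integrable_add Bochner_Integration.integrable_mult_right integrable_divide_zero ir ir1)+
    then show ?thesis unfolding X_def Y_def Z_def int2[OF ir[of "8*n+4"] ir[of "4*n"]] integral_mult_right_zero .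
  qed
  have XY: "X \<le> (E^2 + 2*c) * Y" using id1 J0 ZX by (simp add: algebra_simps)
  have YIP: "Y \<le> I + P"
  proof -
    have "integral\<^sup>L lborel (\<lambda>t. t^(4*n) * (r t * r t)) \<le> integral\<^sup>L lborel (\<lambda>t. t^(2*n) * (r t * r t) + t^(4*n+2) * (r t * r t))"
    proof (rule integral_mono)
      fix t :: real
      have "t^(4*n) \<le> t^(2*n) + t^(4*n+2)"
      proof (cases "\<bar>t\<bar> \<le> 1")
        case True
        have "t^(4*n) = (t^2)^(2*n)" "t^(2*n) = (t^2)^n" by (rule q4)+
        moreover have "(t^2)^(2*n) \<le> (t^2)^n" using True
          by (intro power_decreasing) (auto simp: abs_le_square_iff[symmetric] abs_square_le_1)
        moreover have "0 \<le> t^(4*n+2)" by (subst sq42) simp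
        ultimately show ?thesis by linarith
      next
        case False
        have "t^(4*n) = (t^2)^(2*n)" "t^(4*n+2) = (t^2)^(2*n+1)" by (rule q4)+
        moreover have "(t^2)^(2*n) \<le> (t^2)^(2*n+1)" using False
          by (intro power_increasing) (auto simp: power2_ge_1_iff)
        moreover have "0 \<le> t^(2*n)" by (simp add: power_mult)
        ultimately show ?thesis by linarith
      qed
      note h = mult_right_mono[OF this, of "r t * r t"]
      then show "t^(4*n) * (r t * r t) \<le> t^(2*n) * (r t * r t) + t^(4*n+2) * (r t * r t)"
        by (simp add: distrib_right)
    qed (intro Bochner_Integration.integrable_diff Bochner_Integration.integrable_add Bochner_Integration.integrable_mult_right integrable_divide_zero ir ir1)+
    then show ?thesis unfolding Y_def I_def P_def int2b[OF ir[of "2*n"] ir[of "4*n+2"]] .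
  qed
  have PI: "P \<le> E * I" using id0 B0 by linarith
  have T3: "(r1 t0)\<^sup>2 \<le> integral\<^sup>L lborel (\<lambda>t. \<bar>2 * r1 t * ((t^(4*n+2) - E * t^(2*n)) * r t)\<bar>)"
  proof -
    have "(\<lambda>t. r1 t * r1 t) t0 \<le> integral\<^sup>L lborel (\<lambda>t. \<bar>2 * r1 t * ((t^(4*n+2) - E * t^(2*n)) * r t)\<bar>)"
    proof (rule deriv_le_int[where G="\<lambda>t. r1 t * r1 t" and g="\<lambda>t. 2 * r1 t * ((t^(4*n+2) - E * t^(2*n)) * r t)"])
      fix t show "((\<lambda>t. r1 t * r1 t) has_real_derivative 2 * r1 t * ((t^(4*n+2) - E * t^(2*n)) * r t)) (at t)"
        by (rule derivative_eq_intros d1 d2 refl | simp add: algebra_simps)+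
    next
      show "integrable lborel (\<lambda>t. 2 * r1 t * ((t^(4*n+2) - E * t^(2*n)) * r t))"
        by (rule rd_integrable[OF rd_mult[OF rd_cmult[OF rr1] rq]]) (use cr1 cq in \<open>auto intro!: continuous_intros simp: mult.assoc\<close>)
    qed (use cr1 cq rd_tendsto[OF rd_mult[OF rr1 rr1]] in \<open>auto intro!: continuous_intros simp: mult.assoc\<close>)
    then show ?thesis by (simp add: power2_eq_square)
  qed
  have T4: "integral\<^sup>L lborel (\<lambda>t. \<bar>2 * r1 t * ((t^(4*n+2) - E * t^(2*n)) * r t)\<bar>)
      \<le> integral\<^sup>L lborel (\<lambda>t. t^0 * (r1 t * r1 t) + 2 * (t^(8*n+4) * (r t * r t)) + (2 * E^2) * (t^(4*n) * (r t * r t)))"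
  proof (rule integral_mono)
    fix t :: real
    have e1: "t^(8*n+4) = t^(4*n+2) * t^(4*n+2)" 
         "t^(4*n) = t^(2*n) * t^(2*n)" by (simp_all only: pws) (simp_all add: eval_nat_numeral algebra_simps)
    define a where "a = r1 t" define b where "b = (t^(4*n+2) - E * t^(2*n)) * r t"
    have "\<bar>2 * a * b\<bar> \<le> a * a + b * b"
      by (smt (verit) abs_mult_self_eq abs_mult zero_le_square mult_2 power2_eq_square power2_diff power2_sum)
    also have "b * b \<le> 2 * (t^(8*n+4) * (r t * r t)) + 2 * E^2 * (t^(4*n) * (r t * r t))"
    proof -
      have "0 \<le> (t^(4*n+2) + E * t^(2*n))\<^sup>2 * (r t * r t)" by simp
      then show ?thesis unfolding b_def e1 by (simp add: power2_eq_square algebra_simps)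
    qed
    finally show "\<bar>2 * r1 t * ((t^(4*n+2) - E * t^(2*n)) * r t)\<bar>
       \<le> t^0 * (r1 t * r1 t) + 2 * (t^(8*n+4) * (r t * r t)) + 2 * E^2 * (t^(4*n) * (r t * r t))"
      unfolding a_def b_def by (simp add: algebra_simps)
  next
    show "integrable lborel (\<lambda>t. \<bar>2 * r1 t * ((t^(4*n+2) - E * t^(2*n)) * r t)\<bar>)"
      by (rule integrable_abs, rule rd_integrable[OF rd_mult[OF rd_cmult[OF rr1] rq]]) (use cr1 cq in \<open>auto intro!: continuous_intros simp: mult.assoc\<close>)
  qed (intro Bochner_Integration.integrable_diff Bochner_Integration.integrable_add Bochner_Integration.integrable_mult_right integrable_divide_zero ir ir1)
  have T5: "integral\<^sup>L lborel (\<lambda>t. t^0 * (r1 t * r1 t) + 2 * (t^(8*n+4) * (r t * r t)) + (2 * E^2) * (t^(4*n) * (r t * r t)))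
      = B + 2 * X + 2 * E^2 * Y"
    unfolding B_def X_def Y_def int3b[OF ir1[of 0] ir[of "8*n+4"] ir[of "4*n"]] by (simp only: mult.assoc)
  have c0: "c \<ge> 0" unfolding c_def by simp
  have Y1: "Y \<le> (1 + E) * I" using YIP PI by (simp add: algebra_simps)
  have "(r1 t0)\<^sup>2 \<le> B + 2 * X + 2 * E^2 * Y" using T3 T4 T5 by linarith
  also have "\<dots> \<le> E * I + 2 * ((E^2 + 2*c) * ((1 + E) * I)) + 2 * E^2 * ((1 + E) * I)"
  proof -
    have P0: "P \<ge> 0" unfolding P_def by (rule integral_nonneg_AE, rule AE_I2) (subst sq42, simp)
    have "B \<le> E * I" using id0 P0 by linarith
    moreover have "X \<le> (E^2 + 2*c) * ((1 + E) * I)"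
      using XY Y1 c0 by (smt (verit) mult_left_mono zero_le_power2)
    moreover have "E^2 * Y \<le> E^2 * ((1 + E) * I)" using Y1 by (simp add: mult_left_mono)
    ultimately show ?thesis by linarith
  qed
  also have "\<dots> \<le> (9 + 8 * c) * E^3 * I"
  proof -
    have a1: "E \<le> E^3" using E1 by (simp add: power3_eq_cube) (smt (verit) mult_le_cancel_left1 mult_left_mono one_le_power power2_eq_square)
    have a2: "(E^2 + 2*c) * (1 + E) \<le> (1 + 2*c) * E^2 * (2 * E)"
    proof -
      have e2: "1 \<le> E^2" using E1 by (simp add: one_le_power)
      have "2*c*1 \<le> 2*c*E^2" using c0 e2 by (intro mult_left_mono) auto
      then have "E^2 + 2*c \<le> (1 + 2*c) * E^2" by (simp add: algebra_simps)
      moreover have "1 + E \<le> 2 * E" using E1 by simp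
      ultimately show ?thesis using c0 E1 by (intro mult_mono) auto
    qed
    have a3: "E^2 * (1 + E) \<le> E^2 * (2 * E)" using E1 by (intro mult_left_mono) auto
    have "E * I + 2 * ((E^2 + 2*c) * ((1 + E) * I)) + 2 * E^2 * ((1 + E) * I)
        = (E + 2 * ((E^2 + 2*c) * (1 + E)) + 2 * (E^2 * (1 + E))) * I" by (simp add: algebra_simps)
    also have "\<dots> \<le> (E^3 + 2 * ((1 + 2*c) * E^2 * (2 * E)) + 2 * (E^2 * (2 * E))) * I"
      using a1 a2 a3 I0 by (intro mult_right_mono) auto
    also have "\<dots> = (9 + 8 * c) * E^3 * I" by (simp add: algebra_simps power3_eq_cube power2_eq_square)
    finally show ?thesis by simp
  qed
  also have "(9 + 8 * c) = 9 + 4*(4*real n+2)*(4*real n+1)" unfolding c_def by (simp add: algebra_simps)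
  finally show ?thesis unfolding Ieq .
qed

definition lc :: "nat \<Rightarrow> real \<Rightarrow> nat \<Rightarrow> real" where
  "lc k a i = (-1)^i * ((real k + a) gchoose (k - i)) / fact i"

definition lagp :: "nat \<Rightarrow> real \<Rightarrow> real \<Rightarrow> real" where
  "lagp k a x = (\<Sum>i\<le>k. lc k a i * (real i * x^(i-1)))"

definition lagpp :: "nat \<Rightarrow> real \<Rightarrow> real \<Rightarrow> real" where
  "lagpp k a x = (\<Sum>i\<le>k. lc k a i * (real i * (real (i-1) * x^(i-1-1))))"

lemma laguerre_lc: "laguerre k a x = (\<Sum>i\<le>k. lc k a i * x^i)"
  unfolding laguerre_def lc_def by simp

lemma laguerre_deriv: "(laguerre k a has_real_derivative lagp k a x) (at x)"
  unfolding laguerre_lc[abs_def] lagp_def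
  by (auto intro!: derivative_eq_intros sum.cong simp: mult_ac)

lemma lagp_deriv: "(lagp k a has_real_derivative lagpp k a x) (at x)"
  unfolding lagp_def[abs_def] lagpp_def
  by (auto intro!: derivative_eq_intros sum.cong simp: mult_ac)

lemma gch: "(y - of_nat j) * (y gchoose j) = of_nat (Suc j) * (y gchoose Suc j)"
  using gbinomial_absorb_comp[of y j] gbinomial_absorption[of j y] by simp

lemma lc_aux: "(F::real) > 0 \<Longrightarrow> (-1)^(Suc i) * B / (real (Suc i) * F) * (real(Suc i) * (real (Suc i) + a)) = (-1)^(Suc i) * ((real i + 1 + a) * B) / F"
proof -
  assume F: "F > 0"
  have S: "real (Suc i) > 0" by simp
  show ?thesis using F S by (simp add: field_simps del: of_nat_Suc) (simp add: algebra_simps)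
qed

lemma lc_rec:
  assumes "i < k"
  shows "lc k a (Suc i) * (real (Suc i) * (real (Suc i) + a)) = - (real k - real i) * lc k a i"
proof -
  obtain j where j: "k - i = Suc j" using assms by (metis Suc_diff_Suc)
  have kj: "k - Suc i = j" using j by simp
  have yj: "real k + a - real j = real i + 1 + a" using j assms by (simp add: of_nat_diff)
  have ki: "real k - real i = real (Suc j)" using j assms by (simp add: of_nat_diff[symmetric])
  have g: "(real i + 1 + a) * ((real k + a) gchoose j) = real (Suc j) * ((real k + a) gchoose Suc j)"
    using gch[of "real k + a" j] yj by simp
  have "lc k a (Suc i) * (real (Suc i) * (real (Suc i) + a))
      = (-1)^(Suc i) * ((real i + 1 + a) * ((real k + a) gchoose j)) / fact i"
    unfolding lc_def kj fact_Suc of_nat_mult by (rule lc_aux) simp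
  also have "\<dots> = (-1)^(Suc i) * (real (Suc j) * ((real k + a) gchoose Suc j)) / fact i" by (simp only: g)
  also have "\<dots> = - (real k - real i) * lc k a i" unfolding lc_def j ki by (simp add: field_simps)
  finally show ?thesis .
qed

lemma lag_term:
  "x * (lc k a i * (real i * (real (i-1) * x^(i-1-1)))) + (a + 1 - x) * (lc k a i * (real i * x^(i-1)))
     + real k * (lc k a i * x^i)
   = lc k a i * (real i * (real i + a)) * x^(i-1) + lc k a i * (real k - real i) * x^i"
proof (cases i)
  case 0 then show ?thesis by (simp add: algebra_simps)
next
  case (Suc j)
  show ?thesis
  proof (cases j)
    case 0 then show ?thesis using Suc by (simp add: algebra_simps)
  next
    case (Suc l)
    then have "x * x^(i-1-1) = x^(i-1)" "x * x^(i-1) = x^i" using \<open>i = Suc j\<close> by simp_all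
    then show ?thesis using \<open>i = Suc j\<close> Suc by (simp add: algebra_simps of_nat_diff)
  qed
qed

lemma laguerre_ode: "x * lagpp k a x + (a + 1 - x) * lagp k a x + real k * laguerre k a x = 0"
proof -
  have "x * lagpp k a x + (a + 1 - x) * lagp k a x + real k * laguerre k a x
    = (\<Sum>i\<le>k. lc k a i * (real i * (real i + a)) * x^(i-1)) + (\<Sum>i\<le>k. lc k a i * (real k - real i) * x^i)"
    unfolding lagpp_def lagp_def laguerre_lc sum_distrib_left sum.distrib[symmetric] lag_term ..
  also have "\<dots> = 0"
  proof (cases k)
    case 0 then show ?thesis by simp
  next
    case (Suc m)
    have s1: "(\<Sum>i\<le>k. lc k a i * (real i * (real i + a)) * x^(i-1))
        = (\<Sum>j\<le>m. lc k a (Suc j) * (real (Suc j) * (real (Suc j) + a)) * x^j)"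
      unfolding Suc sum.atMost_Suc_shift by simp
    have s2: "(\<Sum>i\<le>k. lc k a i * (real k - real i) * x^i) = (\<Sum>j\<le>m. lc k a j * (real k - real j) * x^j)"
      unfolding Suc sum.atMost_Suc by simp
    have "(\<Sum>j\<le>m. lc k a (Suc j) * (real (Suc j) * (real (Suc j) + a)) * x^j)
        + (\<Sum>j\<le>m. lc k a j * (real k - real j) * x^j) = (\<Sum>j\<le>m. 0)"
      unfolding sum.distrib[symmetric]
    proof (rule sum.cong)
      fix j assume "j \<in> {..m}"
      then have "j < k" using Suc by simp
      then have h: "lc k a (Suc j) * (real (Suc j) * (real (Suc j) + a)) + lc k a j * (real k - real j) = 0"
        using lc_rec[of j k a] by (simp add: algebra_simps)
      show "lc k a (Suc j) * (real (Suc j) * (real (Suc j) + a)) * x^j + lc k a j * (real k - real j) * x^j = 0"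
        by (metis distrib_right mult_zero_left h)
    qed simp
    then show ?thesis using s1 s2 by simp
  qed
  finally show ?thesis .
qed

lemma lin_comb: "(a::real) - b = c * z \<Longrightarrow> z = 0 \<Longrightarrow> a = b" by simp

lemma e_deriv: "((\<lambda>t. exp (- (t ^ (2*n+2)) / (2 * real n + 2))) has_real_derivative
    (- (t^(2*n+1)) * exp (- (t ^ (2*n+2)) / (2 * real n + 2)))) (at t)"
proof -
  have p: "2 * real n + 2 > 0" "2*n+2 - Suc 0 = 2*n+1" by simp_all
  show ?thesis
    by (rule DERIV_cong[OF DERIV_chain2[OF DERIV_exp DERIV_cdivide[OF DERIV_minus[OF DERIV_pow]]]])
       (use p in \<open>simp add: field_simps\<close>)
qed

lemma x_deriv: "((\<lambda>t. t ^ (2*n+2) / (real n + 1)) has_real_derivative 2 * t^(2*n+1)) (at t)"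
proof -
  have p: "real n + 1 > 0" "2*n+2 - Suc 0 = 2*n+1" by simp_all
  show ?thesis
    by (rule DERIV_cong[OF DERIV_cdivide[OF DERIV_pow]]) (use p in \<open>simp add: field_simps\<close>)
qed

definition av :: "nat \<Rightarrow> real" where "av n = - 1 / (2 * real n + 2)"
definition xx :: "nat \<Rightarrow> real \<Rightarrow> real" where "xx n t = t ^ (2*n+2) / (real n + 1)"
definition ee :: "nat \<Rightarrow> real \<Rightarrow> real" where "ee n t = exp (- (t ^ (2*n+2)) / (2 * real n + 2))"

definition v1 :: "nat \<Rightarrow> nat \<Rightarrow> real \<Rightarrow> real" where
  "v1 n k t = ee n t * t^(2*n+1) * (2 * lagp k (av n) (xx n t) - laguerre k (av n) (xx n t))"

lemma L_chain: "((\<lambda>t. laguerre k a (xx n t)) has_real_derivative lagp k a (xx n t) * (2 * t^(2*n+1))) (at t)"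
  unfolding xx_def by (rule DERIV_chain2[OF laguerre_deriv x_deriv])

lemma Lp_chain: "((\<lambda>t. lagp k a (xx n t)) has_real_derivative lagpp k a (xx n t) * (2 * t^(2*n+1))) (at t)"
  unfolding xx_def by (rule DERIV_chain2[OF lagp_deriv x_deriv])

lemma e_deriv': "(ee n has_real_derivative (- (t^(2*n+1)) * ee n t)) (at t)"
  unfolding ee_def[abs_def] by (rule e_deriv)

lemma v_raw_alt: "v_raw n k = (\<lambda>t. ee n t * laguerre k (av n) (xx n t))"
  unfolding v_raw_def ee_def av_def xx_def by simp

lemma v_deriv: "(v_raw n k has_real_derivative v1 n k t) (at t)"
  unfolding v_raw_alt
  apply (rule DERIV_cong[OF DERIV_mult[OF e_deriv[of n t, folded ee_def] DERIV_chain2[OF laguerre_deriv x_deriv[of n t], folded xx_def]]])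
  apply (simp add: v1_def algebra_simps)
  done

lemma av_ha: "av n * (2 * (real n + 1)) = -1"
  unfolding av_def by (simp add: field_simps)

lemma xx_hX: "xx n t * (real n + 1) = t * t * t^(2*n)"
  unfolding xx_def by (simp add: field_simps power_add power2_eq_square)

lemma v1_deriv: "(v1 n k has_real_derivative (t^(4*n+2) - E_val n k * t^(2*n)) * v_raw n k t) (at t)"
proof -
  define P where "P = t^(2*n)"
  have f: "t^(2*n+1) = t*P" "t^(2*n+1 - Suc 0) = P" "t^(4*n+2) = t*t*P*P" "real(2*n+1) = 2*(real n+1) - 1"
    unfolding P_def by (simp_all add: power_add[symmetric] mult_2[symmetric])
  have hX: "xx n t * (real n+1) = t*t*P" unfolding P_def by (rule xx_hX)
  note ha = av_ha[of n]
  note ode = laguerre_ode[of "xx n t" k "av n"]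
  show ?thesis
    unfolding v1_def[abs_def] v_raw_alt
    apply (rule DERIV_cong)
     apply (rule DERIV_cmult DERIV_mult DERIV_diff e_deriv' DERIV_pow L_chain Lp_chain)+
    apply (simp only: f E_val_def P_def[symmetric])
    apply (insert hX ha ode)
    apply algebra
    done
qed

lemma exp_ge_pow: assumes "0 \<le> s" shows "s^N / fact N \<le> exp (s::real)"
proof -
  have su: "(\<lambda>n. s^n /\<^sub>R fact n) sums exp s" by (rule exp_converges)
  have "sum (\<lambda>n. s^n /\<^sub>R fact n) {N} \<le> suminf (\<lambda>n. s^n /\<^sub>R fact n)"
    by (rule sum_le_suminf) (use su assms in \<open>auto simp: sums_iff\<close>)
  then show ?thesis using su by (simp add: sums_iff divide_inverse mult.commute)
qed

lemma pow_ge_sq: "(t::real)^(2*n+2) \<ge> t^2 - 1"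
proof -
  have b: "2*n+2 = 2*(n+1)" by simp
  have e: "t^(2*n+2) = (t^2)^(n+1)" unfolding b power_mult ..
  show ?thesis
  proof (cases "t^2 \<le> 1")
    case True then show ?thesis unfolding e by (smt (verit) zero_le_power zero_le_power2)
  next
    case False
    then have "t^2 \<le> (t^2)^(n+1)" by (intro self_le_power) auto
    then show ?thesis unfolding e by simp
  qed
qed

lemma rd_ee: "rd (ee n)"
  unfolding rd_def
proof
  fix N
  define M where "M = 2 * real n + 2"
  have M0: "M > 0" unfolding M_def by simp
  have "\<bar>ee n t\<bar> * (1 + t\<^sup>2) ^ N \<le> exp (2/M) * M^N * fact N" for t
  proof -
    define s where "s = (1 + t^2) / M"
    have s0: "s \<ge> 0" unfolding s_def using M0 by simp
    have "- (t^(2*n+2)) / M \<le> (1 - t^2)/M"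
      by (rule divide_right_mono) (use pow_ge_sq[of t n] M0 in auto)
    then have "ee n t \<le> exp ((1 - t^2) / M)"
      unfolding ee_def M_def[symmetric] by simp
    also have "\<dots> = exp (2/M) * exp (- s)"
      unfolding s_def by (simp add: exp_add[symmetric] diff_divide_distrib[symmetric])
    finally have a: "ee n t \<le> exp (2/M) * exp (- s)" .
    have b: "(1 + t\<^sup>2) ^ N = M^N * s^N" unfolding s_def using M0 by (simp add: power_divide)
    have c: "s^N \<le> fact N * exp s" using exp_ge_pow[OF s0, of N] by (simp add: field_simps)
    have "\<bar>ee n t\<bar> * (1 + t\<^sup>2) ^ N = ee n t * (M^N * s^N)" unfolding b ee_def by simp
    also have "\<dots> \<le> (exp (2/M) * exp (- s)) * (M^N * (fact N * exp s))"
      using a c M0 s0 by (intro mult_mono mult_left_mono) (auto simp: ee_def)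
    also have "\<dots> = exp (2/M) * M^N * fact N" by (simp add: exp_minus field_simps)
    finally show ?thesis .
  qed
  then show "\<exists>C. \<forall>t. \<bar>ee n t\<bar> * (1 + t\<^sup>2) ^ N \<le> C" by blast
qed

lemma pb_xx: "pb (xx n)"
proof -
  have "xx n = (\<lambda>t. (1 / (real n + 1)) * t ^ (2*n+2))" unfolding xx_def by (auto simp: fun_eq_iff)
  then show ?thesis by (simp only:) (intro pb_mult pb_const pb_pow pb_id)
qed

lemma pb_comp_poly: assumes "pb g" shows "pb (\<lambda>t. \<Sum>i\<le>k. c i * g t ^ d i)"
  using assms by (intro pb_sum pb_mult pb_const pb_pow) auto

lemma pb_lag: "pb (\<lambda>t. laguerre k a (xx n t))" "pb (\<lambda>t. lagp k a (xx n t))" "pb (\<lambda>t. lagpp k a (xx n t))"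
proof -
  show "pb (\<lambda>t. laguerre k a (xx n t))" unfolding laguerre_lc using pb_comp_poly[OF pb_xx, where k=k and c="lc k a" and d="\<lambda>i. i"] by simp
  show "pb (\<lambda>t. lagp k a (xx n t))" unfolding lagp_def
    using pb_comp_poly[OF pb_xx, where k=k and c="\<lambda>i. lc k a i * real i" and d="\<lambda>i. i - 1"] by (simp add: mult.assoc)
  show "pb (\<lambda>t. lagpp k a (xx n t))" unfolding lagpp_def
    using pb_comp_poly[OF pb_xx, where k=k and c="\<lambda>i. lc k a i * (real i * real (i - 1))" and d="\<lambda>i. i - 1 - 1"] by (simp add: mult.assoc)
qed

lemma rd_v: "rd (v_raw n k)" "rd (v1 n k)"
proof -
  have "v_raw n k = (\<lambda>t. laguerre k (av n) (xx n t) * ee n t)" unfolding v_raw_alt by (auto simp: fun_eq_iff)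
  then show "rd (v_raw n k)" using rd_pb_mult[OF rd_ee pb_lag(1)] by simp
  have "v1 n k = (\<lambda>t. (t^(2*n+1) * (2 * lagp k (av n) (xx n t) - laguerre k (av n) (xx n t))) * ee n t)"
    unfolding v1_def by (auto simp: fun_eq_iff)
  moreover have "pb (\<lambda>t. t^(2*n+1) * (2 * lagp k (av n) (xx n t) - laguerre k (av n) (xx n t)))"
    using pb_lag by (intro pb_mult pb_pow pb_id pb_diff pb_const) auto
  ultimately show "rd (v1 n k)" using rd_pb_mult[OF rd_ee] by simp
qed

definition aw :: "nat \<Rightarrow> real" where "aw n = 1 / (2 * real n + 2)"

definition w1 :: "nat \<Rightarrow> nat \<Rightarrow> real \<Rightarrow> real" where
  "w1 n k t = ee n t * (laguerre k (aw n) (xx n t) + t^(2*n+2) * (2 * lagp k (aw n) (xx n t) - laguerre k (aw n) (xx n t)))"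

lemma w_raw_alt: "w_raw n k = (\<lambda>t. ee n t * t * laguerre k (aw n) (xx n t))"
  unfolding w_raw_def ee_def aw_def xx_def by simp

lemma aw_ha: "aw n * (2 * (real n + 1)) = 1"
  unfolding aw_def by (simp add: field_simps)

lemma w_deriv: "(w_raw n k has_real_derivative w1 n k t) (at t)"
proof -
  define P where "P = t^(2*n)"
  have f: "t^(2*n+1) = t*P" "t^(2*n+2) = t*t*P" unfolding P_def by (simp_all add: power_add[symmetric] mult_2[symmetric])
  show ?thesis
    unfolding w_raw_alt w1_def
    apply (rule DERIV_cong)
     apply (rule DERIV_cmult DERIV_mult DERIV_diff e_deriv' DERIV_pow DERIV_ident L_chain Lp_chain)+
    apply (simp only: f)
    apply algebra
    done
qed

lemma w1_deriv: "(w1 n k has_real_derivative (t^(4*n+2) - (E_val n k + 2) * t^(2*n)) * w_raw n k t) (at t)"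
proof -
  define P where "P = t^(2*n)"
  have f: "t^(2*n+1) = t*P" "t^(2*n+1 - Suc 0) = P" "t^(4*n+2) = t*t*P*P" "real(2*n+1) = 2*(real n+1) - 1"
    "t^(2*n+2) = t*t*P" "t^(2*n+2 - Suc 0) = t*P" "real(2*n+2) = 2*(real n+1)"
    unfolding P_def by (simp_all add: power_add[symmetric] mult_2[symmetric])
  have hX: "xx n t * (real n+1) = t*t*P" unfolding P_def by (rule xx_hX)
  note ha = aw_ha[of n]
  note ode = laguerre_ode[of "xx n t" k "aw n"]
  show ?thesis
    unfolding w1_def[abs_def] w_raw_alt
    apply (rule DERIV_cong)
     apply (rule DERIV_cmult DERIV_mult DERIV_diff DERIV_add e_deriv' DERIV_pow L_chain Lp_chain)+
    apply (simp only: f E_val_def P_def[symmetric])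
    apply (insert hX ha ode)
    apply algebra
    done
qed

lemma rd_w: "rd (w_raw n k)" "rd (w1 n k)"
proof -
  have "w_raw n k = (\<lambda>t. (t * laguerre k (aw n) (xx n t)) * ee n t)" unfolding w_raw_alt by (auto simp: fun_eq_iff)
  moreover have "pb (\<lambda>t. t * laguerre k (aw n) (xx n t))" using pb_lag by (intro pb_mult pb_id) auto
  ultimately show "rd (w_raw n k)" using rd_pb_mult[OF rd_ee] by simp
  have "w1 n k = (\<lambda>t. (laguerre k (aw n) (xx n t) + t^(2*n+2) * (2 * lagp k (aw n) (xx n t) - laguerre k (aw n) (xx n t))) * ee n t)"
    unfolding w1_def by (auto simp: fun_eq_iff)
  moreover have "pb (\<lambda>t. laguerre k (aw n) (xx n t) + t^(2*n+2) * (2 * lagp k (aw n) (xx n t) - laguerre k (aw n) (xx n t)))"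
    using pb_lag by (intro pb_add pb_mult pb_pow pb_id pb_diff pb_const) auto
  ultimately show "rd (w1 n k)" using rd_pb_mult[OF rd_ee] by simp
qed

lemma norm_bound:
  fixes r1 c I B :: real
  assumes "r1\<^sup>2 \<le> B * I" "I \<ge> 0" "c = 1 / sqrt I" "B \<ge> 0"
  shows "\<bar>c * r1\<bar> \<le> sqrt B"
proof (cases "I = 0")
  case True then show ?thesis using assms by simp
next
  case False
  then have I0: "I > 0" using assms by simp
  have "(c * r1)\<^sup>2 = r1\<^sup>2 / I" using assms(3) I0 by (simp add: power_mult_distrib power_divide)
  also have "\<dots> \<le> B" using assms(1) I0 by (simp add: divide_le_eq)
  finally have "(c * r1)\<^sup>2 \<le> B" .
  then have "sqrt ((c * r1)\<^sup>2) \<le> sqrt B" by (rule real_sqrt_le_mono)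
  then show ?thesis by (simp only: real_sqrt_abs)
qed

lemma sqrt_pow_bound:
  assumes "E \<ge> (1::real)"
  shows "sqrt (E^3) \<le> E powr (7/2 - 1 / (4 * real n + 4))"
proof -
  have e1: "E^3 = E powr (3::real)" using powr_realpow[of E 3] assms by simp
  have "sqrt (E^3) = (E powr 3) powr (1/2)" unfolding e1 by (rule powr_half_sqrt[symmetric]) simp
  also have "\<dots> = E powr (3/2)" by (simp add: powr_powr)
  also have "\<dots> \<le> E powr (7/2 - 1 / (4 * real n + 4))"
  proof (rule powr_mono[OF _ assms])
    have "1 / (4 * real n + 4) \<le> 1" by (simp add: field_simps)
    then show "3/2 \<le> 7/2 - 1 / (4 * real n + 4)" by linarith
  qed
  finally show ?thesis .
qed

lemma E_ge1: "E_val n k \<ge> 1" unfolding E_val_def by simp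

theorem mainTheorem4:
  fixes n :: nat
  shows "\<exists>C1 > 0. \<forall>k::nat. \<forall>t::real.
     \<bar>deriv (v_fun n k) t\<bar> \<le> C1 * E_val n k powr (7/2 - 1 / (4 * real n + 4)) \<and>
     \<bar>deriv (w_fun n k) t\<bar> \<le> C1 * E_val n k powr (7/2 - 1 / (4 * real n + 4))"
proof -
  define K where "K = 9 + 4*(4*real n+2)*(4*real n+1)"
  have K0: "K > 0" unfolding K_def by (simp add: add_pos_nonneg)
  define C1 where "C1 = sqrt (27 * K)"
  have C10: "C1 > 0" unfolding C1_def using K0 by simp
  have main: "\<bar>deriv (v_fun n k) t\<bar> \<le> C1 * E_val n k powr (7/2 - 1 / (4 * real n + 4)) \<and>
     \<bar>deriv (w_fun n k) t\<bar> \<le> C1 * E_val n k powr (7/2 - 1 / (4 * real n + 4))" for k t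
  proof -
    define E where "E = E_val n k"
    have E1: "E \<ge> 1" unfolding E_def by (rule E_ge1)
    have fin: "sqrt (K * E'^3) \<le> C1 * E powr (7/2 - 1 / (4 * real n + 4))" if "1 \<le> E'" "E' \<le> 3 * E" for E'
    proof -
      have "E'^3 \<le> (3*E)^3" using that by (intro power_mono) auto
      then have "K * E'^3 \<le> 27 * K * E^3" using K0 by (simp add: power_mult_distrib)
      then have "sqrt (K * E'^3) \<le> sqrt (27 * K) * sqrt (E^3)" by (simp add: real_sqrt_mult[symmetric])
      also have "\<dots> \<le> C1 * E powr (7/2 - 1 / (4 * real n + 4))"
        unfolding C1_def using K0 by (intro mult_left_mono sqrt_pow_bound E1) auto
      finally show ?thesis .
    qed
    have I0v: "integral\<^sup>L lborel (\<lambda>t. (t ^ n * v_raw n k t)\<^sup>2) \<ge> 0" by simp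
    have I0w: "integral\<^sup>L lborel (\<lambda>t. (t ^ n * w_raw n k t)\<^sup>2) \<ge> 0" by simp
    have dv: "deriv (v_fun n k) t = c_const n k * v1 n k t"
    proof -
      have "v_fun n k = (\<lambda>t. c_const n k * v_raw n k t)" by (simp add: fun_eq_iff v_fun_def)
      then show ?thesis using DERIV_cmult[OF v_deriv, of "c_const n k" n k t] by (simp add: DERIV_imp_deriv)
    qed
    have dw: "deriv (w_fun n k) t = d_const n k * w1 n k t"
    proof -
      have "w_fun n k = (\<lambda>t. d_const n k * w_raw n k t)" by (simp add: fun_eq_iff w_fun_def)
      then show ?thesis using DERIV_cmult[OF w_deriv, of "d_const n k" n k t] by (simp add: DERIV_imp_deriv)
    qed
    have cv: "(v1 n k t)\<^sup>2 \<le> K * E^3 * integral\<^sup>L lborel (\<lambda>t. (t ^ n * v_raw n k t)\<^sup>2)"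
      unfolding K_def E_def by (rule core[OF v_deriv v1_deriv rd_v E_ge1])
    have cw: "(w1 n k t)\<^sup>2 \<le> K * (E+2)^3 * integral\<^sup>L lborel (\<lambda>t. (t ^ n * w_raw n k t)\<^sup>2)"
      unfolding K_def E_def by (rule core[OF w_deriv w1_deriv rd_w]) (use E_ge1[of n k] in simp)
    have "\<bar>deriv (v_fun n k) t\<bar> \<le> sqrt (K * E^3)"
      unfolding dv by (rule norm_bound[OF _ I0v]) (use cv K0 E1 in \<open>auto simp: c_const_def\<close>)
    also have "\<dots> \<le> C1 * E powr (7/2 - 1 / (4 * real n + 4))" using fin[of E] E1 by simp
    finally have A: "\<bar>deriv (v_fun n k) t\<bar> \<le> C1 * E powr (7/2 - 1 / (4 * real n + 4))" .
    have "\<bar>deriv (w_fun n k) t\<bar> \<le> sqrt (K * (E+2)^3)"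
      unfolding dw by (rule norm_bound[OF _ I0w]) (use cw K0 E1 in \<open>auto simp: d_const_def\<close>)
    also have "\<dots> \<le> C1 * E powr (7/2 - 1 / (4 * real n + 4))" using fin[of "E+2"] E1 by simp
    finally have B: "\<bar>deriv (w_fun n k) t\<bar> \<le> C1 * E powr (7/2 - 1 / (4 * real n + 4))" .
    show ?thesis using A B unfolding E_def by simp
  qed
  show ?thesis using C10 main by blast
qed

end
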